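(* Let $(A,\vee,\perp,0)$ be a quasi-orthomodular nearsemilattice, and define a partial binary operation $\oplus$ on $A$ by: $x \oplus y = z$ if and only if $x \perp y$ and $z = x \vee y$. Then $(A,\oplus,0)$ is a generalized orthoalgebra, and its natural ordering coincides with the nearsemilattice ordering of $A$.
   Context: A nearsemilattice is a poset $A$ with least element $0$ in which any two elements having a common upper bound have a join $x \vee y$ (a partial operation). An orthogonality on $A$ is a binary relation $\perp$ with: $x \perp y$ implies $y \perp x$; $x \le y$ and $y \perp z$ imply $x \perp z$; $x \perp 0$ for all $x$. A quasi-orthomodular nearsemilattice is a nearsemilattice with an orthogonality such that: (a) if $x \perp y$ then $x \vee y$ exists; (b) if $x \le y$ then $y = x \vee z$ for some $z$ with $x \perp z$; (c) if $x \perp y$, $x \perp z$ and $y \le x \vee z$, then $y \le z$. A generalized orthoalgebra is a system $(A,\oplus,0)$ with $\oplus$ a partial binary operation (write $s \perp t$ to mean $s \oplus t$ is defined) satisfying: (1) if $x \perp y$ then $y \perp x$ and $x \oplus y = y \oplus x$; (2) if $x \perp y$ and $x \oplus y \perp z$, then $y \perp z$, $x \perp y \oplus z$ and $(x \oplus y) \oplus z = x \oplus (y \oplus z)$; (3) $x \perp 0$ and $x \oplus 0 = x$; (4) if $x \perp y$, $x \perp z$ and $x \oplus y = x \oplus z$, then $y = z$; (5) if $x \perp x$ then $x = 0$. Its natural ordering is: $x \le y$ iff $y = x \oplus z$ for some $z$ with $x \perp z$. *)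

theory Defs
  imports Main
begin

definition poset_on :: "'a set \<Rightarrow> ('a \<Rightarrow> 'a \<Rightarrow> bool) \<Rightarrow> bool" where
  "poset_on A le \<longleftrightarrow>
     (\<forall>x\<in>A. le x x) \<and>
     (\<forall>x\<in>A. \<forall>y\<in>A. le x y \<and> le y x \<longrightarrow> x = y) \<and>
     (\<forall>x\<in>A. \<forall>y\<in>A. \<forall>z\<in>A. le x y \<and> le y z \<longrightarrow> le x z)"

definition is_join :: "'a set \<Rightarrow> ('a \<Rightarrow> 'a \<Rightarrow> bool) \<Rightarrow> 'a \<Rightarrow> 'a \<Rightarrow> 'a \<Rightarrow> bool" where
  "is_join A le x y z \<longleftrightarrow> z \<in> A \<and> le x z \<and> le y z \<and>
     (\<forall>u\<in>A. le x u \<and> le y u \<longrightarrow> le z u)"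

definition join_exists :: "'a set \<Rightarrow> ('a \<Rightarrow> 'a \<Rightarrow> bool) \<Rightarrow> 'a \<Rightarrow> 'a \<Rightarrow> bool" where
  "join_exists A le x y \<longleftrightarrow> (\<exists>z. is_join A le x y z)"

text \<open>The (partial) join x \<or> y; meaningful only when join_exists.\<close>
definition join :: "'a set \<Rightarrow> ('a \<Rightarrow> 'a \<Rightarrow> bool) \<Rightarrow> 'a \<Rightarrow> 'a \<Rightarrow> 'a" where
  "join A le x y = (THE z. is_join A le x y z)"

definition nearsemilattice :: "'a set \<Rightarrow> ('a \<Rightarrow> 'a \<Rightarrow> bool) \<Rightarrow> 'a \<Rightarrow> bool" where
  "nearsemilattice A le zero \<longleftrightarrow> poset_on A le \<and> zero \<in> A \<and> (\<forall>x\<in>A. le zero x) \<and>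
     (\<forall>x\<in>A. \<forall>y\<in>A. (\<exists>u\<in>A. le x u \<and> le y u) \<longrightarrow> join_exists A le x y)"

definition orthogonality :: "'a set \<Rightarrow> ('a \<Rightarrow> 'a \<Rightarrow> bool) \<Rightarrow> 'a \<Rightarrow> ('a \<Rightarrow> 'a \<Rightarrow> bool) \<Rightarrow> bool" where
  "orthogonality A le zero orth \<longleftrightarrow>
     (\<forall>x\<in>A. \<forall>y\<in>A. orth x y \<longrightarrow> orth y x) \<and>
     (\<forall>x\<in>A. \<forall>y\<in>A. \<forall>z\<in>A. le x y \<and> orth y z \<longrightarrow> orth x z) \<and>
     (\<forall>x\<in>A. orth x zero)"

definition quasi_orthomodular_nsl ::
  "'a set \<Rightarrow> ('a \<Rightarrow> 'a \<Rightarrow> bool) \<Rightarrow> 'a \<Rightarrow> ('a \<Rightarrow> 'a \<Rightarrow> bool) \<Rightarrow> bool" where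
  "quasi_orthomodular_nsl A le zero orth \<longleftrightarrow>
     nearsemilattice A le zero \<and> orthogonality A le zero orth \<and>
     (\<forall>x\<in>A. \<forall>y\<in>A. orth x y \<longrightarrow> join_exists A le x y) \<and>
     (\<forall>x\<in>A. \<forall>y\<in>A. le x y \<longrightarrow> (\<exists>z\<in>A. orth x z \<and> y = join A le x z)) \<and>
     (\<forall>x\<in>A. \<forall>y\<in>A. \<forall>z\<in>A. orth x y \<and> orth x z \<and> le y (join A le x z) \<longrightarrow> le y z)"

definition gen_orthoalgebra :: "'a set \<Rightarrow> ('a \<Rightarrow> 'a \<Rightarrow> 'a option) \<Rightarrow> 'a \<Rightarrow> bool" where
  "gen_orthoalgebra A oplus zero \<longleftrightarrow>
     zero \<in> A \<and>
     (\<forall>x\<in>A. \<forall>y\<in>A. oplus x y \<noteq> None \<longrightarrow> the (oplus x y) \<in> A) \<and>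
     (\<forall>x\<in>A. \<forall>y\<in>A. oplus x y \<noteq> None \<longrightarrow> oplus y x \<noteq> None \<and> oplus x y = oplus y x) \<and>
     (\<forall>x\<in>A. \<forall>y\<in>A. \<forall>z\<in>A. oplus x y \<noteq> None \<and> oplus (the (oplus x y)) z \<noteq> None \<longrightarrow>
        oplus y z \<noteq> None \<and> oplus x (the (oplus y z)) \<noteq> None \<and>
        oplus (the (oplus x y)) z = oplus x (the (oplus y z))) \<and>
     (\<forall>x\<in>A. oplus x zero = Some x) \<and>
     (\<forall>x\<in>A. \<forall>y\<in>A. \<forall>z\<in>A. oplus x y \<noteq> None \<and> oplus x z \<noteq> None \<and> oplus x y = oplus x z \<longrightarrow> y = z) \<and>
     (\<forall>x\<in>A. oplus x x \<noteq> None \<longrightarrow> x = zero)"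

definition natural_le :: "'a set \<Rightarrow> ('a \<Rightarrow> 'a \<Rightarrow> 'a option) \<Rightarrow> 'a \<Rightarrow> 'a \<Rightarrow> bool" where
  "natural_le A oplus x y \<longleftrightarrow> (\<exists>z\<in>A. oplus x z = Some y)"

definition induced_oplus :: "'a set \<Rightarrow> ('a \<Rightarrow> 'a \<Rightarrow> bool) \<Rightarrow> ('a \<Rightarrow> 'a \<Rightarrow> bool) \<Rightarrow> 'a \<Rightarrow> 'a \<Rightarrow> 'a option" where
  "induced_oplus A le orth x y = (if orth x y then Some (join A le x y) else None)"

end

theory Submission
  imports Defs
begin

context
  fixes A le zero orth
  assumes Q: "quasi_orthomodular_nsl A le zero orth"
begin

lemma Qd: "(((\<forall>x\<in>A. le x x) \<and>
     (\<forall>x\<in>A. \<forall>y\<in>A. le x y \<and> le y x \<longrightarrow> x = y) \<and>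
     (\<forall>x\<in>A. \<forall>y\<in>A. \<forall>z\<in>A. le x y \<and> le y z \<longrightarrow> le x z)) \<and> zero \<in> A \<and> (\<forall>x\<in>A. le zero x) \<and>
     (\<forall>x\<in>A. \<forall>y\<in>A. (\<exists>u\<in>A. le x u \<and> le y u) \<longrightarrow> join_exists A le x y))
  \<and> ((\<forall>x\<in>A. \<forall>y\<in>A. orth x y \<longrightarrow> orth y x) \<and>
     (\<forall>x\<in>A. \<forall>y\<in>A. \<forall>z\<in>A. le x y \<and> orth y z \<longrightarrow> orth x z) \<and>
     (\<forall>x\<in>A. orth x zero)) \<and>
     (\<forall>x\<in>A. \<forall>y\<in>A. orth x y \<longrightarrow> join_exists A le x y) \<and>
     (\<forall>x\<in>A. \<forall>y\<in>A. le x y \<longrightarrow> (\<exists>z\<in>A. orth x z \<and> y = join A le x z)) \<and>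
     (\<forall>x\<in>A. \<forall>y\<in>A. \<forall>z\<in>A. orth x y \<and> orth x z \<and> le y (join A le x z) \<longrightarrow> le y z)"
  using Q unfolding quasi_orthomodular_nsl_def nearsemilattice_def poset_on_def orthogonality_def
  .

lemma refl: "x \<in> A \<Longrightarrow> le x x"
  using conjunct1[OF conjunct1[OF conjunct1[OF Qd]]] by blast
lemma antis: "x \<in> A \<Longrightarrow> y \<in> A \<Longrightarrow> le x y \<Longrightarrow> le y x \<Longrightarrow> x = y"
  using conjunct1[OF conjunct2[OF conjunct1[OF conjunct1[OF Qd]]]] by blast
lemma trans: "x \<in> A \<Longrightarrow> y \<in> A \<Longrightarrow> z \<in> A \<Longrightarrow> le x y \<Longrightarrow> le y z \<Longrightarrow> le x z"
  using conjunct2[OF conjunct2[OF conjunct1[OF conjunct1[OF Qd]]]] by blast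
lemma zeroA: "zero \<in> A"
  using conjunct1[OF conjunct2[OF conjunct1[OF Qd]]] by blast
lemma zero_le: "x \<in> A \<Longrightarrow> le zero x"
  using conjunct1[OF conjunct2[OF conjunct2[OF conjunct1[OF Qd]]]] by blast
lemma ub_join: "x \<in> A \<Longrightarrow> y \<in> A \<Longrightarrow> u \<in> A \<Longrightarrow> le x u \<Longrightarrow> le y u \<Longrightarrow> join_exists A le x y"
  using conjunct2[OF conjunct2[OF conjunct2[OF conjunct1[OF Qd]]]] by blast
lemma osym: "x \<in> A \<Longrightarrow> y \<in> A \<Longrightarrow> orth x y \<Longrightarrow> orth y x"
  using conjunct1[OF conjunct1[OF conjunct2[OF Qd]]] by blast
lemma odown: "x \<in> A \<Longrightarrow> y \<in> A \<Longrightarrow> z \<in> A \<Longrightarrow> le x y \<Longrightarrow> orth y z \<Longrightarrow> orth x z"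
  using conjunct1[OF conjunct2[OF conjunct1[OF conjunct2[OF Qd]]]] by blast
lemma ozero: "x \<in> A \<Longrightarrow> orth x zero"
  using conjunct2[OF conjunct2[OF conjunct1[OF conjunct2[OF Qd]]]] by blast
lemma oj: "x \<in> A \<Longrightarrow> y \<in> A \<Longrightarrow> orth x y \<Longrightarrow> join_exists A le x y"
  using conjunct1[OF conjunct2[OF conjunct2[OF Qd]]] by blast
lemma qb: "x \<in> A \<Longrightarrow> y \<in> A \<Longrightarrow> le x y \<Longrightarrow> \<exists>z\<in>A. orth x z \<and> y = join A le x z"
  using conjunct1[OF conjunct2[OF conjunct2[OF conjunct2[OF Qd]]]] by blast
lemma qc: "x \<in> A \<Longrightarrow> y \<in> A \<Longrightarrow> z \<in> A \<Longrightarrow> orth x y \<Longrightarrow> orth x z \<Longrightarrow> le y (join A le x z) \<Longrightarrow> le y z"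
  using conjunct2[OF conjunct2[OF conjunct2[OF conjunct2[OF Qd]]]] by blast

lemma join_unique: "is_join A le x y z \<Longrightarrow> is_join A le x y z' \<Longrightarrow> z = z'"
  unfolding is_join_def using antis by blast

lemma join_is: "join_exists A le x y \<Longrightarrow> is_join A le x y (join A le x y)"
proof -
  assume "join_exists A le x y"
  then obtain z where z: "is_join A le x y z" unfolding join_exists_def by blast
  have "(THE z. is_join A le x y z) = z"
    apply (rule the_equality[where P="is_join A le x y"])
     apply (rule z)
    apply (erule join_unique[OF _ z])
    done
  thus ?thesis using z unfolding join_def by simp
qed

lemma join_eq: "is_join A le x y z \<Longrightarrow> join A le x y = z"
proof -
  assume h: "is_join A le x y z"
  hence "join_exists A le x y" unfolding join_exists_def by blast
  from join_unique[OF join_is[OF this] h] show ?thesis .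
qed

lemma jA: "join_exists A le x y \<Longrightarrow> join A le x y \<in> A"
  using join_is[of x y] unfolding is_join_def by blast
lemma jl: "join_exists A le x y \<Longrightarrow> le x (join A le x y)"
  using join_is[of x y] unfolding is_join_def by blast
lemma jr: "join_exists A le x y \<Longrightarrow> le y (join A le x y)"
  using join_is[of x y] unfolding is_join_def by blast
lemma jlub: "join_exists A le x y \<Longrightarrow> u \<in> A \<Longrightarrow> le x u \<Longrightarrow> le y u \<Longrightarrow> le (join A le x y) u"
  using join_is[of x y] unfolding is_join_def by blast

lemma jcomm: "join A le x y = join A le y x"
proof -
  have "is_join A le x y = is_join A le y x" unfolding is_join_def by (rule ext) blast
  thus ?thesis unfolding join_def by simp
qed

lemma jzero: "x \<in> A \<Longrightarrow> join A le x zero = x"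
  by (rule join_eq) (auto simp: is_join_def refl zero_le)

lemma assoc_part:
  assumes x: "x \<in> A" and y: "y \<in> A" and z: "z \<in> A"
    and xy: "orth x y" and sz: "orth (join A le x y) z"
  shows "orth y z \<and> orth x (join A le y z) \<and>
         join A le (join A le x y) z = join A le x (join A le y z)"
proof -
  define s where "s = join A le x y"
  have ej: "join_exists A le x y" using oj x y xy by blast
  have sA: "s \<in> A" using jA ej s_def by blast
  have xs: "le x s" and ys: "le y s" using jl jr ej s_def by auto
  have yz: "orth y z" using odown[OF y sA z ys] sz s_def by blast
  have zx: "orth x z" using odown[OF x sA z xs] sz s_def by blast
  have ej2: "join_exists A le s z" using oj sA z sz s_def by blast
  define w where "w = join A le s z"
  have wA: "w \<in> A" using jA ej2 w_def by blast
  have sw: "le s w" and zw: "le z w" using jl jr ej2 w_def by auto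
  have xw: "le x w" using trans[OF x sA wA xs sw] .
  have yw: "le y w" using trans[OF y sA wA ys sw] .
  have eyz: "join_exists A le y z" using ub_join[OF y z wA yw zw] .
  define u where "u = join A le y z"
  have uA: "u \<in> A" using jA eyz u_def by blast
  obtain r where rA: "r \<in> A" and xr: "orth x r" and wr: "w = join A le x r"
    using qb[OF x wA xw] by blast
  have yr: "le y r" using qc[OF x y rA xy xr] yw wr by simp
  have zr: "le z r" using qc[OF x z rA zx xr] zw wr by simp
  have ur: "le u r" using jlub[OF eyz rA yr zr] u_def by simp
  have ru: "orth r x" using osym[OF x rA xr] .
  have ux: "orth u x" using odown[OF uA rA x ur ru] .
  have xu: "orth x u" using osym[OF uA x ux] .
  have exu: "join_exists A le x u" using oj[OF x uA xu] .
  have yu: "le y u" and zu: "le z u" using jl jr eyz u_def by auto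
  have "is_join A le x u w"
    unfolding is_join_def
  proof (intro conjI ballI impI)
    show "w \<in> A" by fact
    show "le x w" by fact
    show "le u w" using jlub[OF eyz wA yw zw] u_def by simp
  next
    fix v assume vA: "v \<in> A" and h: "le x v \<and> le u v"
    have "le y v" using trans[OF y uA vA yu] h by blast
    hence "le s v" using jlub[OF ej vA] h s_def by blast
    moreover have "le z v" using trans[OF z uA vA zu] h by blast
    ultimately show "le w v" using jlub[OF ej2 vA] w_def by blast
  qed
  hence "join A le x u = w" by (rule join_eq)
  thus ?thesis using yz xu s_def w_def u_def by simp
qed

lemma main:
  "gen_orthoalgebra A (induced_oplus A le orth) zero \<and>
   (\<forall>x\<in>A. \<forall>y\<in>A. natural_le A (induced_oplus A le orth) x y \<longleftrightarrow> le x y)"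
proof -
  let ?o = "induced_oplus A le orth"
  have c1: "\<forall>x\<in>A. \<forall>y\<in>A. ?o x y \<noteq> None \<longrightarrow> the (?o x y) \<in> A"
    by (auto simp: induced_oplus_def intro: jA oj)
  have c2: "\<forall>x\<in>A. \<forall>y\<in>A. ?o x y \<noteq> None \<longrightarrow> ?o y x \<noteq> None \<and> ?o x y = ?o y x"
    using osym jcomm by (simp add: induced_oplus_def)
  have c3: "\<forall>x\<in>A. \<forall>y\<in>A. \<forall>z\<in>A. ?o x y \<noteq> None \<and> ?o (the (?o x y)) z \<noteq> None \<longrightarrow>
        ?o y z \<noteq> None \<and> ?o x (the (?o y z)) \<noteq> None \<and>
        ?o (the (?o x y)) z = ?o x (the (?o y z))"
  proof (intro ballI impI)
    fix x y z assume x: "x \<in> A" and y: "y \<in> A" and z: "z \<in> A"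
      and h: "?o x y \<noteq> None \<and> ?o (the (?o x y)) z \<noteq> None"
    hence xy: "orth x y" by (auto simp: induced_oplus_def split: if_splits)
    hence sz: "orth (join A le x y) z" using h by (auto simp: induced_oplus_def split: if_splits)
    from assoc_part[OF x y z xy sz] xy sz
    show "?o y z \<noteq> None \<and> ?o x (the (?o y z)) \<noteq> None \<and>
        ?o (the (?o x y)) z = ?o x (the (?o y z))"
      by (simp add: induced_oplus_def)
  qed
  have c4: "\<forall>x\<in>A. ?o x zero = Some x"
    by (auto simp: induced_oplus_def ozero jzero)
  have c5: "\<forall>x\<in>A. \<forall>y\<in>A. \<forall>z\<in>A. ?o x y \<noteq> None \<and> ?o x z \<noteq> None \<and> ?o x y = ?o x z \<longrightarrow> y = z"
  proof (intro ballI impI)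
    fix x y z assume x: "x \<in> A" and y: "y \<in> A" and z: "z \<in> A"
      and h: "?o x y \<noteq> None \<and> ?o x z \<noteq> None \<and> ?o x y = ?o x z"
    hence xy: "orth x y" and xz: "orth x z" and e: "join A le x y = join A le x z"
      by (auto simp: induced_oplus_def split: if_splits)
    have "le y (join A le x z)" using jr[OF oj[OF x y xy]] e by simp
    hence "le y z" using qc[OF x y z xy xz] by blast
    moreover have "le z (join A le x y)" using jr[OF oj[OF x z xz]] e by simp
    hence "le z y" using qc[OF x z y xz xy] by blast
    ultimately show "y = z" using antis y z by blast
  qed
  have c6: "\<forall>x\<in>A. ?o x x \<noteq> None \<longrightarrow> x = zero"
  proof (intro ballI impI)
    fix x assume x: "x \<in> A" and h: "?o x x \<noteq> None"
    hence xx: "orth x x" by (auto simp: induced_oplus_def split: if_splits)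
    have "le x (join A le x zero)" using jzero[OF x] refl[OF x] by simp
    hence "le x zero" using qc[OF x x zeroA xx ozero[OF x]] by blast
    thus "x = zero" using antis[OF x zeroA] zero_le[OF x] by blast
  qed
  have c7: "\<forall>x\<in>A. \<forall>y\<in>A. natural_le A ?o x y \<longleftrightarrow> le x y"
  proof (intro ballI iffI)
    fix x y assume x: "x \<in> A" and y: "y \<in> A" and "natural_le A ?o x y"
    then obtain z where z: "z \<in> A" and "?o x z = Some y" unfolding natural_le_def by blast
    hence "orth x z" "y = join A le x z" by (auto simp: induced_oplus_def split: if_splits)
    thus "le x y" using jl[OF oj[OF x z]] by simp
  next
    fix x y assume x: "x \<in> A" and y: "y \<in> A" and "le x y"
    then obtain z where "z \<in> A" "orth x z" "y = join A le x z" using qb by blast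
    thus "natural_le A ?o x y" unfolding natural_le_def induced_oplus_def by auto
  qed
  show ?thesis unfolding gen_orthoalgebra_def using zeroA c1 c2 c3 c4 c5 c6 c7 by blast
qed

end

theorem theorem3:
  assumes "quasi_orthomodular_nsl A le zero orth"
  shows "gen_orthoalgebra A (induced_oplus A le orth) zero \<and>
         (\<forall>x\<in>A. \<forall>y\<in>A. natural_le A (induced_oplus A le orth) x y \<longleftrightarrow> le x y)"
  using main[OF assms] .

end
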